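(* For every pure state $|\psi\rangle\in\mathcal{H}'$ and every Z$_2$-invariant measurement $\{\mathcal{E}_\mu\}$ such that for each outcome $\mu$ with $w_\mu:=\mathrm{Tr}\,\mathcal{E}_\mu(|\psi\rangle\langle\psi|)>0$ we have $\mathcal{E}_\mu(|\psi\rangle\langle\psi|)=w_\mu|\phi_\mu\rangle\langle\phi_\mu|$ for a pure state $|\phi_\mu\rangle$, $$\sum_\mu w_\mu\,\mathcal{C}(|\phi_\mu\rangle)\le\mathcal{C}(|\psi\rangle).$$ That is, $\mathcal{C}$ is an ensemble Z$_2$-frameness monotone.
   Context: $\mathcal{H}'$ is a two-dimensional Hilbert space with orthonormal basis $|0\rangle,|1\rangle$; $\pi=|0\rangle\langle0|-|1\rangle\langle1|$. A Z$_2$-invariant operation is a completely positive, trace-nonincreasing linear map $\mathcal{E}$ on operators on $\mathcal{H}'$ with $\mathcal{E}(\pi X\pi)=\pi\mathcal{E}(X)\pi$ for all $X$. A Z$_2$-invariant measurement is a (countable) family $\{\mathcal{E}_\mu\}$ of Z$_2$-invariant operations whose sum is trace-preserving. For a pure state $|\chi\rangle\in\mathcal{H}'$, $\mathcal{C}(|\chi\rangle)=2\min\{|\langle0|\chi\rangle|^2,|\langle1|\chi\rangle|^2\}$. *)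

theory Defs
  imports "HOL-Analysis.Analysis"
begin

type_synonym qvec = "complex ^ 2"
type_synonym qop = "complex ^ 2 ^ 2"

definition ket0 :: qvec where "ket0 = axis 1 1"
definition ket1 :: qvec where "ket1 = axis 2 1"

text \<open>Hermitian inner product, linear in the second argument.\<close>
definition cinner :: "qvec \<Rightarrow> qvec \<Rightarrow> complex" where
  "cinner u v = (\<Sum>k\<in>UNIV. cnj (u $ k) * v $ k)"

definition qtrace :: "qop \<Rightarrow> complex" where
  "qtrace A = (\<Sum>i\<in>UNIV. A $ i $ i)"

definition proj :: "qvec \<Rightarrow> qop" where
  "proj \<phi> = (\<chi> i j. \<phi> $ i * cnj (\<phi> $ j))"

definition cscaleM :: "complex \<Rightarrow> qop \<Rightarrow> qop" where
  "cscaleM c X = (\<chi> i j. c * X $ i $ j)"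

definition parity :: qop where
  "parity = (\<chi> i j. if i = j then (if i = 1 then 1 else -1) else 0)"

definition real_nonneg :: "complex \<Rightarrow> bool" where
  "real_nonneg z \<longleftrightarrow> Im z = 0 \<and> 0 \<le> Re z"

definition psd :: "qop \<Rightarrow> bool" where
  "psd A \<longleftrightarrow> (\<forall>v. real_nonneg (cinner v (A *v v)))"

text \<open>Positive semidefiniteness of an n x n block matrix with 2x2 blocks X i j
  (i.e. an operator on C^n tensor H').\<close>
definition block_psd :: "nat \<Rightarrow> (nat \<Rightarrow> nat \<Rightarrow> qop) \<Rightarrow> bool" where
  "block_psd n X \<longleftrightarrow>
     (\<forall>v :: nat \<Rightarrow> qvec. real_nonneg (\<Sum>i<n. \<Sum>j<n. cinner (v i) (X i j *v v j)))"

definition complex_linear :: "(qop \<Rightarrow> qop) \<Rightarrow> bool" where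
  "complex_linear E \<longleftrightarrow> (\<forall>X Y. E (X + Y) = E X + E Y) \<and> (\<forall>c X. E (cscaleM c X) = cscaleM c (E X))"

text \<open>Complete positivity: id_n tensor E is positive for every ancilla dimension n.\<close>
definition completely_positive :: "(qop \<Rightarrow> qop) \<Rightarrow> bool" where
  "completely_positive E \<longleftrightarrow>
     (\<forall>n X. block_psd n X \<longrightarrow> block_psd n (\<lambda>i j. E (X i j)))"

definition trace_nonincreasing :: "(qop \<Rightarrow> qop) \<Rightarrow> bool" where
  "trace_nonincreasing E \<longleftrightarrow> (\<forall>X. psd X \<longrightarrow> Re (qtrace (E X)) \<le> Re (qtrace X))"

definition Z2_invariant_operation :: "(qop \<Rightarrow> qop) \<Rightarrow> bool" where
  "Z2_invariant_operation E \<longleftrightarrow>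
     complex_linear E \<and> completely_positive E \<and> trace_nonincreasing E \<and>
     (\<forall>X. E (parity ** X ** parity) = parity ** E X ** parity)"

definition Z2_invariant_measurement :: "'i set \<Rightarrow> ('i \<Rightarrow> qop \<Rightarrow> qop) \<Rightarrow> bool" where
  "Z2_invariant_measurement I E \<longleftrightarrow>
     countable I \<and> (\<forall>\<mu>\<in>I. Z2_invariant_operation (E \<mu>)) \<and>
     (\<forall>X. ((\<lambda>\<mu>. qtrace (E \<mu> X)) has_sum qtrace X) I)"

definition frameness :: "qvec \<Rightarrow> real" where
  "frameness x = 2 * min ((cmod (cinner ket0 x))\<^sup>2) ((cmod (cinner ket1 x))\<^sup>2)"

end

theory Submission
  imports Defs
begin


definition P0 :: qop where "P0 = (\<chi> i j. if i = 1 \<and> j = 1 then 1 else 0)"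
definition P1 :: qop where "P1 = (\<chi> i j. if i = 2 \<and> j = 2 then 1 else 0)"
definition M01 :: qop where "M01 = (\<chi> i j. if i = 1 \<and> j = 2 then 1 else 0)"
definition M10 :: qop where "M10 = (\<chi> i j. if i = 2 \<and> j = 1 then 1 else 0)"

lemma two_ne: "(1::2) \<noteq> 2" "(2::2) \<noteq> 1" by simp_all

lemma parity_conj: "(parity ** Y ** parity) $ i $ j = (if i = j then Y$i$j else - Y$i$j)"
  using exhaust_2[of i] exhaust_2[of j]
  by (auto simp add: matrix_matrix_mult_def sum_2 parity_def)

lemma proj_decomp: "proj \<psi> = cscaleM (\<psi>$1 * cnj (\<psi>$1)) P0 + cscaleM (\<psi>$2 * cnj (\<psi>$2)) P1
   + cscaleM (\<psi>$1 * cnj (\<psi>$2)) M01 + cscaleM (\<psi>$2 * cnj (\<psi>$1)) M10"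
  unfolding vec_eq_iff forall_2
  by (simp add: proj_def cscaleM_def P0_def P1_def M01_def M10_def)

lemma proj_ket0: "proj ket0 = P0"
  unfolding vec_eq_iff forall_2
  by (simp add: proj_def P0_def ket0_def axis_def)

lemma qtrace_P0: "qtrace P0 = 1" and qtrace_P1: "qtrace P1 = 1"
  by (simp_all add: qtrace_def sum_2 P0_def P1_def)

lemma par_P0: "parity ** P0 ** parity = P0" and par_P1: "parity ** P1 ** parity = P1"
  and par_M01: "parity ** M01 ** parity = cscaleM (-1) M01"
  and par_M10: "parity ** M10 ** parity = cscaleM (-1) M10"
  unfolding vec_eq_iff forall_2 parity_conj
  by (simp_all add: P0_def P1_def M01_def M10_def cscaleM_def)

lemma cinner_ket0: "cinner ket0 x = x$1" and cinner_ket1: "cinner ket1 x = x$2"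
  by (simp_all add: cinner_def sum_2 ket0_def ket1_def axis_def)

lemma op_add: "Z2_invariant_operation E \<Longrightarrow> E (X + Y) = E X + E Y"
  by (simp add: Z2_invariant_operation_def complex_linear_def)
lemma op_scale: "Z2_invariant_operation E \<Longrightarrow> E (cscaleM c X) = cscaleM c (E X)"
  by (simp add: Z2_invariant_operation_def complex_linear_def)
lemma op_cov: "Z2_invariant_operation E \<Longrightarrow> E (parity ** X ** parity) = parity ** E X ** parity"
  by (simp add: Z2_invariant_operation_def)

lemma even_offdiag:
  assumes "Z2_invariant_operation E" "parity ** X ** parity = X" "i \<noteq> j"
  shows "E X $ i $ j = 0"
proof -
  have "E X = parity ** E X ** parity" using op_cov[OF assms(1), of X] assms(2) by simp
  then have "E X $ i $ j = (parity ** E X ** parity) $ i $ j" by simp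
  then show ?thesis using assms(3) by (simp add: parity_conj)
qed

lemma odd_diag:
  assumes "Z2_invariant_operation E" "parity ** X ** parity = cscaleM (-1) X"
  shows "E X $ i $ i = 0"
proof -
  have "cscaleM (-1) (E X) = parity ** E X ** parity"
    using op_cov[OF assms(1), of X] assms(2) op_scale[OF assms(1)] by simp
  then have "(cscaleM (-1) (E X)) $ i $ i = (parity ** E X ** parity) $ i $ i" by simp
  then show ?thesis by (simp add: parity_conj cscaleM_def)
qed

definition choi :: "nat \<Rightarrow> nat \<Rightarrow> qop" where
  "choi i j = (if i = 0 then (if j = 0 then P0 else M01) else (if j = 0 then M10 else P1))"

lemma real_nonneg_cnj: "real_nonneg (cnj S * S)"
proof -
  have "cnj S * S = complex_of_real ((cmod S)^2)"
    by (metis complex_norm_square mult.commute)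
  then show ?thesis by (simp add: real_nonneg_def)
qed

lemma choi_psd: "block_psd 2 choi"
  unfolding block_psd_def
proof
  fix v :: "nat \<Rightarrow> qvec"
  have "(\<Sum>i<2. \<Sum>j<2. cinner (v i) (choi i j *v v j)) = cnj (v 0 $ 1 + v 1 $ 2) * (v 0 $ 1 + v 1 $ 2)"
    by (simp add: numeral_2_eq_2 lessThan_Suc choi_def cinner_def sum_2 matrix_vector_mult_def
        P0_def P1_def M01_def M10_def algebra_simps)
  then show "real_nonneg (\<Sum>i<2. \<Sum>j<2. cinner (v i) (choi i j *v v j))"
    using real_nonneg_cnj[of "v 0 $ 1 + v 1 $ 2"] by simp
qed

lemma choi_E_psd: "Z2_invariant_operation E \<Longrightarrow> block_psd 2 (\<lambda>i j. E (choi i j))"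
  using choi_psd by (simp add: Z2_invariant_operation_def completely_positive_def)

lemma minor1:
  assumes "Z2_invariant_operation E"
  shows "real_nonneg (cnj s * s * E P0 $1$1 + cnj s * t * E M01 $1$2 + cnj t * s * E M10 $2$1 + cnj t * t * E P1 $2$2)"
proof -
  define v :: "nat \<Rightarrow> qvec" where "v = (\<lambda>i. if i = 0 then (\<chi> k. if k = 1 then s else 0) else (\<chi> k. if k = 2 then t else 0))"
  have "real_nonneg (\<Sum>i<2. \<Sum>j<2. cinner (v i) (E (choi i j) *v v j))"
    using choi_E_psd[OF assms] unfolding block_psd_def by blast
  moreover have "(\<Sum>i<2. \<Sum>j<2. cinner (v i) (E (choi i j) *v v j)) = cnj s * s * E P0 $1$1 + cnj s * t * E M01 $1$2 + cnj t * s * E M10 $2$1 + cnj t * t * E P1 $2$2"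
    by (simp add: v_def numeral_2_eq_2 lessThan_Suc choi_def cinner_def sum_2 matrix_vector_mult_def algebra_simps)
  ultimately show ?thesis by simp
qed

lemma minor2:
  assumes "Z2_invariant_operation E"
  shows "real_nonneg (cnj s * s * E P0 $2$2 + cnj s * t * E M01 $2$1 + cnj t * s * E M10 $1$2 + cnj t * t * E P1 $1$1)"
proof -
  define v :: "nat \<Rightarrow> qvec" where "v = (\<lambda>i. if i = 0 then (\<chi> k. if k = 2 then s else 0) else (\<chi> k. if k = 1 then t else 0))"
  have "real_nonneg (\<Sum>i<2. \<Sum>j<2. cinner (v i) (E (choi i j) *v v j))"
    using choi_E_psd[OF assms] unfolding block_psd_def by blast
  moreover have "(\<Sum>i<2. \<Sum>j<2. cinner (v i) (E (choi i j) *v v j)) = cnj s * s * E P0 $2$2 + cnj s * t * E M01 $2$1 + cnj t * s * E M10 $1$2 + cnj t * t * E P1 $1$1"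
    by (simp add: v_def numeral_2_eq_2 lessThan_Suc choi_def cinner_def sum_2 matrix_vector_mult_def algebra_simps)
  ultimately show ?thesis by simp
qed



definition rn :: "complex \<Rightarrow> bool" where "rn z \<longleftrightarrow> Im z = 0 \<and> 0 \<le> Re z"

lemma choi2:
  assumes H: "\<And>s t. rn (cnj s * s * a + cnj s * t * u + cnj t * s * u' + cnj t * t * d)"
  shows "Im a = 0 \<and> 0 \<le> Re a \<and> Im d = 0 \<and> 0 \<le> Re d \<and> (cmod u)^2 \<le> Re a * Re d \<and> u' = cnj u"
proof -
  have ha: "Im a = 0" "0 \<le> Re a" using H[of 1 0] by (simp_all add: rn_def)
  have hd: "Im d = 0" "0 \<le> Re d" using H[of 0 1] by (simp_all add: rn_def)
  have h1: "Im u + Im u' = 0" using H[of 1 1] ha hd by (simp add: rn_def)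
  have h2: "Re u - Re u' = 0" using H[of 1 \<i>] ha hd by (simp add: rn_def)
  have u': "u' = cnj u" using h1 h2 by (simp add: complex_eq_iff)
  define N where "N = (cmod u)^2"
  have ucu: "u * cnj u = complex_of_real N" unfolding N_def by (metis complex_norm_square of_real_power)
  have Q: "0 \<le> Re a * l^2 - 2 * l * N + N * Re d" for l :: real
  proof -
    have "rn (cnj (complex_of_real l) * complex_of_real l * a + cnj (complex_of_real l) * (- cnj u) * u
         + cnj (- cnj u) * complex_of_real l * u' + cnj (- cnj u) * (- cnj u) * d)" by (rule H)
    moreover have "cnj (complex_of_real l) * complex_of_real l * a + cnj (complex_of_real l) * (- cnj u) * u
         + cnj (- cnj u) * complex_of_real l * u' + cnj (- cnj u) * (- cnj u) * d
       = complex_of_real (l^2) * a - 2 * complex_of_real l * (u * cnj u) + (u * cnj u) * d"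
      by (simp add: u' algebra_simps power2_eq_square)
    moreover have ea: "a = complex_of_real (Re a)" using ha by (simp add: complex_eq_iff)
    moreover have ed: "d = complex_of_real (Re d)" using hd by (simp add: complex_eq_iff)
    moreover have "complex_of_real (l^2) * complex_of_real (Re a) - 2 * complex_of_real l * complex_of_real N
        + complex_of_real N * complex_of_real (Re d) = complex_of_real (Re a * l^2 - 2 * l * N + N * Re d)"
      by (simp add: algebra_simps)
    ultimately have "rn (complex_of_real (Re a * l^2 - 2 * l * N + N * Re d))"
      unfolding ucu by metis
    then show ?thesis by (simp add: rn_def)
  qed
  have N0: "0 \<le> N" unfolding N_def by simp
  have "N \<le> Re a * Re d"
  proof (cases "Re a = 0")
    case True
    have "0 \<le> - 2 * (Re d + 1) * N + N * Re d" using Q[of "Re d + 1"] True by (simp add: algebra_simps)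
    then have "N * (Re d + 2) \<le> 0" by (simp add: algebra_simps)
    moreover have "Re d + 2 > 0" using hd by simp
    ultimately have "N \<le> 0" by (simp add: mult_le_0_iff)
    then show ?thesis using True by simp
  next
    case False
    then have ap: "Re a > 0" using ha by simp
    have "0 \<le> Re a * (N / Re a)^2 - 2 * (N / Re a) * N + N * Re d" by (rule Q)
    also have "\<dots> = N * (Re d - N / Re a)" using ap by (simp add: power2_eq_square field_simps)
    finally have "0 \<le> N * (Re d - N / Re a)" .
    then have "N = 0 \<or> N / Re a \<le> Re d" using N0 by (auto simp: zero_le_mult_iff)
    then show ?thesis
    proof
      assume "N = 0" then show ?thesis using ap hd by simp
    next
      assume "N / Re a \<le> Re d" then show ?thesis using ap by (simp add: field_simps)
    qed
  qed
  then show ?thesis using ha hd u' N_def by simp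
qed

lemma key:
  fixes p q a b c d X Y A B :: real
  assumes nn: "0 \<le> p" "0 \<le> q" "0 \<le> a" "0 \<le> b" "0 \<le> c" "0 \<le> d" "0 \<le> X" "0 \<le> Y"
    and hX: "X^2 \<le> a*d" and hY: "Y^2 \<le> b*c"
    and hA: "A = p*a + q*c" and hB: "B = p*b + q*d"
    and hAB: "A*B \<le> p*q*(X+Y)^2"
  shows "min A B \<le> p*(a+b)"
proof (rule ccontr)
  assume "\<not> ?thesis"
  then have g1: "q*c > p*b" and g2: "q*d > p*a" using hA hB by (auto simp: algebra_simps)
  define P where "P = (p*a)*(p*b)"
  define Q where "Q = (q*c)*(q*d)"
  have "P < Q" unfolding P_def Q_def
    using g1 g2 nn by (metis mult.commute mult_nonneg_nonneg mult_strict_mono')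
  have P0: "0 \<le> P" "0 \<le> Q" unfolding P_def Q_def using nn by auto
  have "A*B = P + Q + p*q*(a*d) + p*q*(b*c)" unfolding P_def Q_def hA hB by (simp add: algebra_simps)
  moreover have "p*q*(X+Y)^2 = p*q*X^2 + p*q*Y^2 + 2*(p*q*X*Y)" by (simp add: algebra_simps power2_eq_square)
  moreover have "p*q*X^2 \<le> p*q*(a*d)" using hX nn by (simp add: mult_left_mono)
  moreover have "p*q*Y^2 \<le> p*q*(b*c)" using hY nn by (simp add: mult_left_mono)
  ultimately have s: "P + Q \<le> 2*(p*q*X*Y)" using hAB by linarith
  have "(X*Y)^2 \<le> (a*d)*(b*c)" using hX hY nn
    by (simp add: power_mult_distrib mult_mono zero_le_power2)
  then have "(p*q*X*Y)^2 \<le> (p*q)^2 * ((a*d)*(b*c))"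
    by (simp add: power_mult_distrib mult_left_mono mult.assoc)
  also have "\<dots> = P*Q" unfolding P_def Q_def by (simp add: algebra_simps power2_eq_square)
  finally have pq: "(p*q*X*Y)^2 \<le> P*Q" .
  have "(P+Q)^2 \<le> (2*(p*q*X*Y))^2" using s P0 by (intro power_mono) auto
  also have "\<dots> = 4*(p*q*X*Y)^2" by (simp add: power_mult_distrib)
  also have "\<dots> \<le> 4*(P*Q)" using pq by simp
  finally have "(P - Q)^2 \<le> 0" by (simp add: algebra_simps power2_eq_square)
  then have "P = Q" by simp
  then show False using \<open>P < Q\<close> by simp
qed



lemma rn_eq: "real_nonneg = rn" by (auto simp: fun_eq_iff real_nonneg_def rn_def)

lemma outcome_bound:
  assumes F: "Z2_invariant_operation F" and wdef: "w = Re (qtrace (F (proj \<psi>)))"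
    and pure: "w > 0 \<Longrightarrow> F (proj \<psi>) = cscaleM (complex_of_real w) (proj \<phi>)"
  shows "0 \<le> w * frameness \<phi> \<and> w * frameness \<phi> \<le> 2 * (cmod (\<psi>$1))^2 * Re (qtrace (F P0))
     \<and> w * frameness \<phi> \<le> 2 * (cmod (\<psi>$2))^2 * Re (qtrace (F P1))"
proof -
  define p where "p = (cmod (\<psi>$1))^2"
  define q where "q = (cmod (\<psi>$2))^2"
  define z where "z = \<psi>$1 * cnj (\<psi>$2)"
  have pc: "\<psi>$1 * cnj (\<psi>$1) = complex_of_real p" unfolding p_def by (metis complex_norm_square of_real_power)
  have qc: "\<psi>$2 * cnj (\<psi>$2) = complex_of_real q" unfolding q_def by (metis complex_norm_square of_real_power)
  have zc: "\<psi>$2 * cnj (\<psi>$1) = cnj z" unfolding z_def by simp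
  have zn: "cmod z = sqrt p * sqrt q" unfolding z_def p_def q_def by (simp add: norm_mult)
  define Y where "Y = F (proj \<psi>)"
  have Yd: "Y = cscaleM (complex_of_real p) (F P0) + cscaleM (complex_of_real q) (F P1)
      + cscaleM z (F M01) + cscaleM (cnj z) (F M10)"
    unfolding Y_def using proj_decomp[of \<psi>] pc qc zc z_def
    by (simp add: op_add[OF F] op_scale[OF F])
  have o1: "F P0 $ i $ j = 0" "F P1 $ i $ j = 0" if "i \<noteq> j" for i j
    using even_offdiag[OF F par_P0 that] even_offdiag[OF F par_P1 that] by auto
  have o2: "F M01 $ i $ i = 0" "F M10 $ i $ i = 0" for i
    using odd_diag[OF F par_M01] odd_diag[OF F par_M10] by auto
  have Y11: "Y $1$1 = complex_of_real p * F P0 $1$1 + complex_of_real q * F P1 $1$1"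
    unfolding Yd by (simp add: cscaleM_def o2)
  have Y22: "Y $2$2 = complex_of_real p * F P0 $2$2 + complex_of_real q * F P1 $2$2"
    unfolding Yd by (simp add: cscaleM_def o2)
  have Y12: "Y $1$2 = z * F M01 $1$2 + cnj z * F M10 $1$2"
    unfolding Yd by (simp add: cscaleM_def o1)
  define a where "a = Re (F P0 $1$1)"
  define b where "b = Re (F P0 $2$2)"
  define c where "c = Re (F P1 $1$1)"
  define d where "d = Re (F P1 $2$2)"
  have m1: "Im (F P0 $1$1) = 0 \<and> 0 \<le> a \<and> Im (F P1 $2$2) = 0 \<and> 0 \<le> d \<and> (cmod (F M01 $1$2))^2 \<le> a * d
      \<and> F M10 $2$1 = cnj (F M01 $1$2)"
    unfolding a_def d_def by (rule choi2) (use minor1[OF F] in \<open>simp add: rn_eq\<close>)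
  have m2: "Im (F P0 $2$2) = 0 \<and> 0 \<le> b \<and> Im (F P1 $1$1) = 0 \<and> 0 \<le> c \<and> (cmod (F M01 $2$1))^2 \<le> b * c
      \<and> F M10 $1$2 = cnj (F M01 $2$1)"
    unfolding b_def c_def by (rule choi2) (use minor2[OF F] in \<open>simp add: rn_eq\<close>)
  define X1 where "X1 = cmod (F M01 $1$2)"
  define X2 where "X2 = cmod (F M10 $1$2)"
  have X1b: "X1^2 \<le> a*d" using m1 X1_def by simp
  have X2b: "X2^2 \<le> b*c" using m2 X2_def by simp
  define A where "A = Re (Y$1$1)"
  define B where "B = Re (Y$2$2)"
  have hA: "A = p*a + q*c" unfolding A_def Y11 a_def c_def by simp
  have hB: "B = p*b + q*d" unfolding B_def Y22 b_def d_def by simp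
  have p0: "0 \<le> p" "0 \<le> q" unfolding p_def q_def by simp_all
  have w: "w = A + B" unfolding wdef A_def B_def Y_def by (simp add: qtrace_def sum_2)
  have tr0: "Re (qtrace (F P0)) = a + b" unfolding a_def b_def by (simp add: qtrace_def sum_2)
  have tr1: "Re (qtrace (F P1)) = c + d" unfolding c_def d_def by (simp add: qtrace_def sum_2)
  have A0: "0 \<le> A" "0 \<le> B" using hA hB m1 m2 p0 by auto
  have fr0: "0 \<le> frameness \<phi>" by (simp add: frameness_def)
  show ?thesis
  proof (cases "w > 0")
    case False
    then have "w = 0" using w A0 by simp
    then show ?thesis using tr0 tr1 m1 m2 p0 unfolding p_def[symmetric] q_def[symmetric] by simp
  next
    case True
    have Yp: "Y = cscaleM (complex_of_real w) (proj \<phi>)" using pure[OF True] Y_def by simp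
    have c1: "\<phi>$1 * cnj (\<phi>$1) = complex_of_real ((cmod (\<phi>$1))^2)" by (metis complex_norm_square of_real_power)
    have c2: "\<phi>$2 * cnj (\<phi>$2) = complex_of_real ((cmod (\<phi>$2))^2)" by (metis complex_norm_square of_real_power)
    have Aphi: "A = w * (cmod (\<phi>$1))^2" unfolding A_def Yp
      by (simp add: cscaleM_def proj_def c1 del: of_real_power)
    have Bphi: "B = w * (cmod (\<phi>$2))^2" unfolding B_def Yp
      by (simp add: cscaleM_def proj_def c2 del: of_real_power)
    have "(cmod (Y$1$2))^2 = A * B" unfolding Aphi Bphi Yp
      by (simp add: cscaleM_def proj_def norm_mult power_mult_distrib abs_of_nonneg power2_eq_square)
    moreover have "cmod (Y$1$2) \<le> sqrt p * sqrt q * (X1 + X2)" unfolding Y12 X1_def X2_def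
      using norm_triangle_ineq[of "z * F M01 $1$2" "cnj z * F M10 $1$2"] zn
      by (simp add: norm_mult algebra_simps)
    ultimately have AB: "A * B \<le> p * q * (X1 + X2)^2"
    proof -
      assume e: "(cmod (Y$1$2))^2 = A * B" and l: "cmod (Y$1$2) \<le> sqrt p * sqrt q * (X1 + X2)"
      have "(cmod (Y$1$2))^2 \<le> (sqrt p * sqrt q * (X1 + X2))^2" using l by (intro power_mono) auto
      also have "\<dots> = p * q * (X1 + X2)^2" using p0 by (simp add: power_mult_distrib)
      finally show ?thesis using e by simp
    qed
    have k1: "min A B \<le> p*(a+b)"
      by (rule key[OF p0 _ _ _ _ _ _ X1b X2b hA hB AB]) (use m1 m2 X1_def X2_def in auto)
    have k2: "min A B \<le> q*(c+d)"
      by (rule key[of q p c d a b X2 X1]) (use m1 m2 X1_def X2_def p0 X1b X2b hA hB AB in \<open>auto simp: algebra_simps\<close>)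
    have wf: "w * frameness \<phi> = 2 * min A B"
      unfolding frameness_def cinner_ket0 cinner_ket1 Aphi Bphi using True
      by (simp add: min_mult_distrib_left)
    show ?thesis using wf k1 k2 tr0 tr1 A0 unfolding p_def[symmetric] q_def[symmetric] by simp
  qed
qed



theorem lemma11:
  fixes \<psi> :: qvec and I :: "'i set" and E :: "'i \<Rightarrow> qop \<Rightarrow> qop"
    and \<phi> :: "'i \<Rightarrow> qvec" and w :: "'i \<Rightarrow> real"
  assumes "norm \<psi> = 1"
    and "Z2_invariant_measurement I E"
    and "\<And>\<mu>. w \<mu> = Re (qtrace (E \<mu> (proj \<psi>)))"
    and "\<And>\<mu>. \<mu> \<in> I \<Longrightarrow> w \<mu> > 0 \<Longrightarrow>
           norm (\<phi> \<mu>) = 1 \<and> E \<mu> (proj \<psi>) = cscaleM (complex_of_real (w \<mu>)) (proj (\<phi> \<mu>))"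
  shows "(\<lambda>\<mu>. w \<mu> * frameness (\<phi> \<mu>)) summable_on I \<and>
         (\<Sum>\<^sub>\<infinity>\<mu>\<in>I. w \<mu> * frameness (\<phi> \<mu>)) \<le> frameness \<psi>"
proof -
  define p where "p = (cmod (\<psi>$1))^2"
  define q where "q = (cmod (\<psi>$2))^2"
  define g where "g = (\<lambda>\<mu>. w \<mu> * frameness (\<phi> \<mu>))"
  define f0 where "f0 = (\<lambda>\<mu>. 2 * p * Re (qtrace (E \<mu> P0)))"
  define f1 where "f1 = (\<lambda>\<mu>. 2 * q * Re (qtrace (E \<mu> P1)))"
  have ops: "\<And>\<mu>. \<mu> \<in> I \<Longrightarrow> Z2_invariant_operation (E \<mu>)"
    using assms(2) by (simp add: Z2_invariant_measurement_def)
  have hs: "\<And>X. ((\<lambda>\<mu>. qtrace (E \<mu> X)) has_sum qtrace X) I"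
    using assms(2) by (simp add: Z2_invariant_measurement_def)
  have h0: "(f0 has_sum (2 * p)) I" unfolding f0_def
    using has_sum_cmult_right[OF has_sum_Re[OF hs[of P0]], of "2*p"] by (simp add: qtrace_P0)
  have h1: "(f1 has_sum (2 * q)) I" unfolding f1_def
    using has_sum_cmult_right[OF has_sum_Re[OF hs[of P1]], of "2*q"] by (simp add: qtrace_P1)
  have b: "0 \<le> g \<mu> \<and> g \<mu> \<le> f0 \<mu> \<and> g \<mu> \<le> f1 \<mu>" if "\<mu> \<in> I" for \<mu>
    unfolding g_def f0_def f1_def p_def q_def
    by (rule outcome_bound[OF ops[OF that] assms(3)]) (use assms(4)[OF that] in auto)
  have sg: "g summable_on I"
    by (rule summable_on_comparison_test[of f0]) (use h0 b in \<open>auto simp: summable_on_def\<close>)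
  have l0: "infsum g I \<le> 2 * p"
    using infsum_mono[OF sg, of f0] h0 b by (metis summable_on_def infsumI)
  have l1: "infsum g I \<le> 2 * q"
    using infsum_mono[OF sg, of f1] h1 b by (metis summable_on_def infsumI)
  have "frameness \<psi> = 2 * min p q" unfolding frameness_def cinner_ket0 cinner_ket1 p_def q_def by simp
  then show ?thesis using sg l0 l1 unfolding g_def by simp
qed

end
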